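(* Let $a>0$, $c>0$ and $b\ge 0$. Then the system $$\dot x=x(1-y+cx-axz),\qquad \dot y=y(-1+x),\qquad \dot z=z(-b+ax^2)$$ has no rational first integrals.
   Context: A rational first integral is a non-constant rational function $H\in\mathbb{C}(x,y,z)$ with $\mathcal{X}H=0$, where $\mathcal{X}=x(1-y+cx-axz)\partial_x+y(-1+x)\partial_y+z(-b+ax^2)\partial_z$. *)

theory Defs
  imports "HOL-Analysis.Analysis"
begin

definition poly3 :: "(complex \<Rightarrow> complex \<Rightarrow> complex \<Rightarrow> complex) \<Rightarrow> bool" where
  "poly3 F \<longleftrightarrow> (\<exists>(N::nat) (c :: nat \<Rightarrow> nat \<Rightarrow> nat \<Rightarrow> complex).
     \<forall>x y z. F x y z = (\<Sum>i\<le>N. \<Sum>j\<le>N. \<Sum>k\<le>N. c i j k * x ^ i * y ^ j * z ^ k))"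

definition vfX :: "real \<Rightarrow> real \<Rightarrow> real \<Rightarrow> (complex \<Rightarrow> complex \<Rightarrow> complex \<Rightarrow> complex)
    \<Rightarrow> complex \<Rightarrow> complex \<Rightarrow> complex \<Rightarrow> complex" where
  "vfX a b c F x y z =
     x * (1 - y + of_real c * x - of_real a * x * z) * deriv (\<lambda>t. F t y z) x
   + y * (-1 + x) * deriv (\<lambda>t. F x t z) y
   + z * (- of_real b + of_real a * x ^ 2) * deriv (\<lambda>t. F x y t) z"

text \<open>H = P/Q in C(x,y,z) (Q a nonzero polynomial) is a rational first integral iff
it is non-constant and X H = 0; both are checked on the dense open set where Q does not vanish.\<close>
definition rational_first_integral :: "real \<Rightarrow> real \<Rightarrow> real \<Rightarrow>
    (complex \<Rightarrow> complex \<Rightarrow> complex \<Rightarrow> complex) \<Rightarrow> (complex \<Rightarrow> complex \<Rightarrow> complex \<Rightarrow> complex) \<Rightarrow> bool" where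
  "rational_first_integral a b c P Q \<longleftrightarrow>
     poly3 P \<and> poly3 Q \<and> (\<exists>x y z. Q x y z \<noteq> 0) \<and>
     \<not> (\<exists>k. \<forall>x y z. Q x y z \<noteq> 0 \<longrightarrow> P x y z / Q x y z = k) \<and>
     (\<forall>x y z. Q x y z \<noteq> 0 \<longrightarrow> vfX a b c (\<lambda>x y z. P x y z / Q x y z) x y z = 0)"

end

theory Submission
  imports Defs "HOL-Computational_Algebra.Polynomial"
begin

definition is_der :: "('a::comm_ring_1 \<Rightarrow> 'a) \<Rightarrow> bool" where
  "is_der d \<longleftrightarrow> (\<forall>x y. d (x + y) = d x + d y) \<and> (\<forall>x y. d (x * y) = d x * y + x * d y)"

lemma is_derD:
  assumes "is_der d"
  shows "d (x + y) = d x + d y" "d (x * y) = d x * y + x * d y"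
  using assms unfolding is_der_def by auto

lemma is_der_0: "is_der d \<Longrightarrow> d 0 = 0"
  using is_derD(1)[of d 0 0] by simp

lemma is_der_1: "is_der d \<Longrightarrow> d 1 = 0"
  using is_derD(2)[of d 1 1] by simp

lemma is_der_minus: "is_der d \<Longrightarrow> d (- x) = - d x"
proof -
  assume d: "is_der d"
  have "d x + d (- x) = 0" using is_derD(1)[OF d, of x "-x"] is_der_0[OF d] by simp
  then show ?thesis by (metis add.commute add_eq_0_iff2)
qed

lemma is_der_diff: "is_der d \<Longrightarrow> d (x - y) = d x - d y"
  using is_derD(1)[of d x "-y"] is_der_minus[of d y] by simp

lemma is_der_sum: "is_der d \<Longrightarrow> d (sum f A) = sum (\<lambda>i. d (f i)) A"
  by (induction A rule: infinite_finite_induct) (auto simp: is_der_0 is_derD)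

lemma is_der_pderiv: "is_der (pderiv :: 'a::idom poly \<Rightarrow> _)"
  unfolding is_der_def by (simp add: pderiv_add pderiv_mult algebra_simps)

lemma is_der_map_poly:
  assumes d: "is_der d"
  shows "is_der (map_poly d)"
proof -
  have d0: "d 0 = 0" using is_der_0[OF d] .
  have add: "map_poly d (p + q) = map_poly d p + map_poly d q" for p q
    by (rule poly_eqI) (simp add: coeff_map_poly d0 is_derD[OF d])
  have mult: "map_poly d (p * q) = map_poly d p * q + p * map_poly d q" for p q
  proof (rule poly_eqI)
    fix n
    have "coeff (map_poly d (p * q)) n = d (\<Sum>i\<le>n. coeff p i * coeff q (n - i))"
      by (simp add: coeff_map_poly d0 coeff_mult)
    also have "\<dots> = (\<Sum>i\<le>n. d (coeff p i) * coeff q (n - i)) + (\<Sum>i\<le>n. coeff p i * d (coeff q (n - i)))"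
      by (simp add: is_der_sum[OF d] is_derD[OF d] sum.distrib)
    also have "\<dots> = coeff (map_poly d p * q + p * map_poly d q) n"
      by (simp add: coeff_mult coeff_map_poly d0)
    finally show "coeff (map_poly d (p * q)) n = coeff (map_poly d p * q + p * map_poly d q) n" .
  qed
  show ?thesis unfolding is_der_def using add mult by blast
qed

lemma is_der_comb:
  assumes "is_der d1" "is_der d2"
  shows "is_der (\<lambda>f. A * d1 f + B * d2 f)"
  unfolding is_der_def using is_derD[OF assms(1)] is_derD[OF assms(2)]
  by (simp add: algebra_simps)

lemma is_der_comb3:
  assumes "is_der d1" "is_der d2" "is_der d3"
  shows "is_der (\<lambda>f. A * d1 f + B * d2 f + C * d3 f)"
  unfolding is_der_def using is_derD[OF assms(1)] is_derD[OF assms(2)] is_derD[OF assms(3)]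
  by (simp add: algebra_simps)

lemma is_der_power:
  assumes d: "is_der d" and dX: "d X = X * G"
  shows "d (X ^ n) = of_nat n * X ^ n * G"
proof (induction n)
  case 0 then show ?case by (simp add: is_der_1[OF d])
next
  case (Suc n)
  have "d (X ^ Suc n) = d (X * X ^ n)" by simp
  also have "\<dots> = X * G * X ^ n + X * (of_nat n * X ^ n * G)" using is_derD(2)[OF d] Suc dX by simp
  also have "\<dots> = of_nat (Suc n) * X ^ Suc n * G" by (simp add: algebra_simps)
  finally show ?case .
qed

lemma is_der_bracket:
  assumes d: "is_der d" and dX: "d X = X * G"
  shows "(X ^ n * q1) * d (X ^ m * p1) - (X ^ m * p1) * d (X ^ n * q1)
       = X ^ m * X ^ n * (q1 * d p1 - p1 * d q1 + (of_nat m - of_nat n) * G * p1 * q1)"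
  using is_derD(2)[OF d] is_der_power[OF d dX] by (simp add: algebra_simps)

lemma bracket_zero:
  fixes X :: "'a::idom"
  assumes d: "is_der d" and dX: "d X = X * G" and X: "X \<noteq> 0"
    and eq: "(X ^ n * q1) * d (X ^ m * p1) - (X ^ m * p1) * d (X ^ n * q1) = 0"
  shows "q1 * d p1 - p1 * d q1 + (of_nat m - of_nat n) * G * p1 * q1 = 0"
  using eq is_der_bracket[OF d dX, of n q1 m p1] X by simp


type_synonym t1 = "complex poly"
type_synonym t2 = "complex poly poly"
type_synonym t3 = "complex poly poly poly"

definition ordz :: "'a::zero poly \<Rightarrow> nat" where "ordz p = (LEAST i. coeff p i \<noteq> 0)"

lemma ordz_nz: "p \<noteq> 0 \<Longrightarrow> coeff p (ordz p) \<noteq> 0"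
  unfolding ordz_def by (rule LeastI_ex) (meson leading_coeff_neq_0)

lemma ordz_less: "i < ordz p \<Longrightarrow> coeff p i = 0"
  unfolding ordz_def using not_less_Least by blast

lemma ordz_factor:
  fixes p :: "'a::comm_semiring_1 poly"
  assumes "p \<noteq> 0"
  shows "p = [:0,1:] ^ ordz p * poly_shift (ordz p) p \<and> coeff (poly_shift (ordz p) p) 0 = coeff p (ordz p)"
proof
  have "[:0,1:] ^ ordz p * poly_shift (ordz p) p = monom 1 (ordz p) * poly_shift (ordz p) p"
    by (simp add: monom_altdef)
  also have "\<dots> = p"
    by (rule poly_eqI) (auto simp: coeff_monom_mult coeff_poly_shift ordz_less)
  finally show "p = [:0,1:] ^ ordz p * poly_shift (ordz p) p" by simp
  show "coeff (poly_shift (ordz p) p) 0 = coeff p (ordz p)" by (simp add: coeff_poly_shift)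
qed

definition B1 :: "complex \<Rightarrow> t2" where "B1 c = [:0, 1 - [:0,1:], [:c:]:]"
definition B2 :: t2 where "B2 = [:-[:0,1:], [:0,1:]:]"
definition E2 :: "complex \<Rightarrow> complex \<Rightarrow> t2" where "E2 a b = [:-[:b:], 0, [:a:]:]"
definition G2 :: "complex \<Rightarrow> t2" where "G2 c = [:1 - [:0,1:], [:c:]:]"
definition Yd :: "complex \<Rightarrow> t2 \<Rightarrow> t2" where "Yd c f = B1 c * pderiv f + B2 * map_poly pderiv f"
definition Dd :: "complex \<Rightarrow> complex \<Rightarrow> complex \<Rightarrow> t3 \<Rightarrow> t3" where
  "Dd a b c p = [:B1 c, [:0,0,-[:a:]:]:] * map_poly pderiv p + [:B2:] * map_poly (map_poly pderiv) p
     + [:0, E2 a b:] * pderiv p"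

lemma is_der_Yd: "is_der (Yd c)"
proof -
  have "Yd c = (\<lambda>f. B1 c * pderiv f + B2 * map_poly pderiv f)" by (rule ext) (simp add: Yd_def)
  then show ?thesis by (simp only:) (rule is_der_comb[OF is_der_pderiv is_der_map_poly[OF is_der_pderiv]])
qed

lemma is_der_Dd: "is_der (Dd a b c)"
proof -
  have "Dd a b c = (\<lambda>p. [:B1 c, [:0,0,-[:a:]:]:] * map_poly pderiv p + [:B2:] * map_poly (map_poly pderiv) p
     + [:0, E2 a b:] * pderiv p)" by (rule ext) (simp add: Dd_def)
  then show ?thesis
    by (simp only:) (rule is_der_comb3[OF is_der_map_poly[OF is_der_pderiv] is_der_map_poly[OF is_der_map_poly[OF is_der_pderiv]] is_der_pderiv])
qed

lemma Yd_X: "Yd c [:0,1:] = [:0,1:] * G2 c"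
  by (simp add: Yd_def B1_def G2_def pderiv_pCons map_poly_pCons one_pCons)

lemma Dd_Z: "Dd a b c [:0,1:] = [:0,1:] * [:E2 a b:]"
  by (simp add: Dd_def pderiv_pCons map_poly_pCons one_pCons)

lemma coeff_Dd0: "coeff (Dd a b c p) 0 = Yd c (coeff p 0)"
  by (simp add: Dd_def Yd_def coeff_mult_0 coeff_map_poly)

lemma coeff_Yd0: "coeff (Yd c f) 0 = -[:0,1:] * pderiv (coeff f 0)"
  by (simp add: Yd_def B1_def B2_def coeff_mult_0 coeff_map_poly)

lemma degree_pderiv_mult_le: "degree (u * pderiv v) \<le> degree u + degree (v::'a::{idom,semiring_char_0} poly) - 1"
proof (cases "degree v = 0")
  case True
  then have "pderiv v = 0" using pderiv_eq_0_iff by blast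
  then show ?thesis by simp
next
  case False
  have "degree (u * pderiv v) \<le> degree u + degree (pderiv v)" by (rule degree_mult_le)
  also have "\<dots> = degree u + degree v - 1" using False by (simp add: degree_pderiv)
  finally show ?thesis .
qed

lemma degree_Yd: "degree (Yd c f) \<le> degree f + 1"
proof -
  have "degree (B1 c * pderiv f) \<le> degree f + 1"
  proof -
    have "degree (B1 c * pderiv f) \<le> degree (B1 c) + degree f - 1" by (rule degree_pderiv_mult_le)
    moreover have "degree (B1 c) \<le> 2" by (simp add: B1_def)
    ultimately show ?thesis by linarith
  qed
  moreover have "degree (B2 * map_poly pderiv f) \<le> degree f + 1"
  proof -
    have "degree (B2 * map_poly pderiv f) \<le> degree B2 + degree (map_poly pderiv f)" by (rule degree_mult_le)
    moreover have "degree B2 \<le> 1" by (simp add: B2_def)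
    moreover have "degree (map_poly pderiv f) \<le> degree f" by (rule map_poly_degree_leq)
    ultimately show ?thesis by linarith
  qed
  ultimately show ?thesis unfolding Yd_def by (meson degree_add_le)
qed


lemma coeff_mult_pderiv_top:
  fixes u v :: t1
  shows "coeff (u * pderiv v) (degree u + degree v) = 0"
proof (cases "degree v = 0")
  case True
  then have "pderiv v = 0" using pderiv_eq_0_iff by blast
  then show ?thesis by simp
next
  case False
  have "degree (u * pderiv v) \<le> degree u + degree v - 1" by (rule degree_pderiv_mult_le)
  then have "degree (u * pderiv v) < degree u + degree v" using False by linarith
  then show ?thesis by (simp add: coeff_eq_0)
qed

lemma lead_pderiv:
  fixes v :: t1
  assumes "degree v \<noteq> 0"
  shows "coeff (pderiv v) (degree v - 1) = of_nat (degree v) * lead_coeff v"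
  using assms by (simp add: coeff_pderiv)

lemma DEG:
  fixes u v :: t1
  assumes u: "u \<noteq> 0" and v: "v \<noteq> 0" and eq: "u * pderiv v = v * pderiv u"
  shows "degree u = degree v"
proof (cases "degree v = 0 \<or> degree u = 0")
  case True
  then show ?thesis
  proof
    assume "degree v = 0"
    then have "pderiv v = 0" using pderiv_eq_0_iff by blast
    then have "pderiv u = 0" using eq v by simp
    then show ?thesis using \<open>degree v = 0\<close> pderiv_eq_0_iff by metis
  next
    assume "degree u = 0"
    then have "pderiv u = 0" using pderiv_eq_0_iff by blast
    then have "pderiv v = 0" using eq u by simp
    then show ?thesis using \<open>degree u = 0\<close> pderiv_eq_0_iff by metis
  qed
next
  case False
  then have dv: "degree v \<noteq> 0" and du: "degree u \<noteq> 0" by auto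
  have degv: "degree (pderiv v) = degree v - 1" and degu: "degree (pderiv u) = degree u - 1"
    by (simp_all add: degree_pderiv)
  have "coeff (u * pderiv v) (degree u + (degree v - 1)) = lead_coeff u * (of_nat (degree v) * lead_coeff v)"
    using coeff_mult_degree_sum[of u "pderiv v"] degv lead_pderiv[OF dv] by simp
  moreover have "coeff (v * pderiv u) (degree v + (degree u - 1)) = lead_coeff v * (of_nat (degree u) * lead_coeff u)"
    using coeff_mult_degree_sum[of v "pderiv u"] degu lead_pderiv[OF du] by simp
  moreover have "degree u + (degree v - 1) = degree v + (degree u - 1)" using du dv by linarith
  ultimately have "lead_coeff u * (of_nat (degree v) * lead_coeff v) = lead_coeff v * (of_nat (degree u) * lead_coeff u)"
    using eq by metis
  then have "(of_nat (degree v) :: complex) = of_nat (degree u)" using u v by simp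
  then show ?thesis by simp
qed

lemma DL:
  fixes u v :: t1
  assumes v: "v \<noteq> 0" and eq: "u * pderiv v = v * pderiv u"
  shows "\<exists>\<mu>. u = smult \<mu> v"
proof (cases "u = 0")
  case True then show ?thesis by (intro exI[of _ 0]) simp
next
  case False
  have d: "degree u = degree v" using DEG[OF False v eq] .
  define \<mu> where "\<mu> = lead_coeff u / lead_coeff v"
  define w where "w = u - smult \<mu> v"
  have weq: "w * pderiv v = v * pderiv w"
    unfolding w_def using eq by (simp add: pderiv_diff pderiv_smult algebra_simps)
  have cw: "coeff w (degree u) = 0" unfolding w_def \<mu>_def using v d by simp
  have "w = 0"
  proof (rule ccontr)
    assume "w \<noteq> 0"
    then have "degree w = degree v" using DEG[OF _ v weq] by simp
    then have "coeff w (degree w) = 0" using cw d by simp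
    then show False using \<open>w \<noteq> 0\<close> by simp
  qed
  then show ?thesis unfolding w_def by auto
qed

lemma T1L:
  fixes u v :: t1
  assumes u: "u \<noteq> 0" and v: "v \<noteq> 0"
    and eq: "v * (- [:0,1:] * pderiv u) - u * (- [:0,1:] * pderiv v) + [:\<kappa>:] * (1 - [:0,1:]) * u * v = 0"
  shows "\<kappa> = 0 \<and> u * pderiv v = v * pderiv u"
proof -
  define w where "w = u * pderiv v - v * pderiv u"
  have gen: "v * (- X * pu) - u * (- X * pv) + K * G * u * v = X * (u * pv - v * pu) + K * (G * u * v)"
    for X pu pv K G :: t1 by (simp add: algebra_simps)
  have eq2: "[:0,1:] * w + [:\<kappa>:] * ((1 - [:0,1:]) * u * v) = 0"
    using eq unfolding w_def gen .
  define N where "N = degree u + degree v"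
  have "coeff w N = 0"
    unfolding w_def N_def using coeff_mult_pderiv_top[of u v] coeff_mult_pderiv_top[of v u]
    by (simp add: add.commute)
  then have c1: "coeff ([:0,1:] * w) (Suc N) = 0" by simp
  have d1: "degree ((1 - [:0,1:]) :: t1) = 1" by (simp add: one_pCons)
  have l1: "lead_coeff ((1 - [:0,1:]) :: t1) = -1" by (simp add: one_pCons)
  have nz: "(1 - [:0,1:] :: t1) \<noteq> 0" using d1 by auto
  have dd: "degree ((1 - [:0,1:]) * u) = Suc (degree u)" using d1 nz u by (simp add: degree_mult_eq)
  have "coeff ((1 - [:0,1:]) * u * v) (Suc N) = lead_coeff ((1 - [:0,1:]) * u) * lead_coeff v"
    using coeff_mult_degree_sum[of "(1 - [:0,1:]) * u" v] dd unfolding N_def by simp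
  also have "\<dots> = - lead_coeff u * lead_coeff v" using l1 by (simp add: lead_coeff_mult)
  finally have c2: "coeff ((1 - [:0,1:]) * u * v) (Suc N) = - lead_coeff u * lead_coeff v" .
  have "coeff ([:0,1:] * w + [:\<kappa>:] * ((1 - [:0,1:]) * u * v)) (Suc N) = 0" using eq2 by simp
  then have "\<kappa> * (- lead_coeff u * lead_coeff v) = 0" using c1 c2 by simp
  then have k: "\<kappa> = 0" using u v by simp
  then have "[:0,1:] * w = 0" using eq2 by simp
  then have "w = 0" by simp
  then show ?thesis using k unfolding w_def by simp
qed


lemma PL:
  fixes f g :: t2
  assumes a: "a \<noteq> 0" and f: "f \<noteq> 0" and g: "g \<noteq> 0"
    and eq: "g * Yd c f - f * Yd c g + [:[:\<kappa>:]:] * (E2 a b * f * g) = 0"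
  shows "\<kappa> = 0"
proof -
  define N where "N = Suc (Suc (degree f + degree g))"
  have c1: "coeff (g * Yd c f) N = 0"
  proof -
    have "degree (g * Yd c f) \<le> degree g + degree (Yd c f)" by (rule degree_mult_le)
    then have "degree (g * Yd c f) < N" using degree_Yd[of c f] unfolding N_def by linarith
    then show ?thesis by (simp add: coeff_eq_0)
  qed
  have c2: "coeff (f * Yd c g) N = 0"
  proof -
    have "degree (f * Yd c g) \<le> degree f + degree (Yd c g)" by (rule degree_mult_le)
    then have "degree (f * Yd c g) < N" using degree_Yd[of c g] unfolding N_def by linarith
    then show ?thesis by (simp add: coeff_eq_0)
  qed
  have dE: "degree (E2 a b) = 2" using a by (simp add: E2_def)
  have lE: "lead_coeff (E2 a b) = [:a:]" using a by (simp add: E2_def)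
  have Enz: "E2 a b \<noteq> 0" using dE by auto
  have dEf: "degree (E2 a b * f) = 2 + degree f" using dE Enz f by (simp add: degree_mult_eq)
  have "coeff (E2 a b * f * g) N = lead_coeff (E2 a b * f) * lead_coeff g"
    using coeff_mult_degree_sum[of "E2 a b * f" g] dEf unfolding N_def by simp
  also have "\<dots> = [:a:] * lead_coeff f * lead_coeff g" using lE by (simp add: lead_coeff_mult)
  finally have c3: "coeff (E2 a b * f * g) N = [:a:] * lead_coeff f * lead_coeff g" .
  have "coeff (g * Yd c f - f * Yd c g + [:[:\<kappa>:]:] * (E2 a b * f * g)) N = 0" using eq by simp
  then have "[:\<kappa>:] * ([:a:] * lead_coeff f * lead_coeff g) = 0" using c1 c2 c3 by simp
  then show ?thesis using a f g by simp
qed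

lemma PL2:
  fixes f g :: t2
  assumes f: "f \<noteq> 0" and g: "g \<noteq> 0"
    and eq: "g * Yd c f - f * Yd c g = 0"
  shows "ordz f = ordz g \<and> (\<exists>\<mu>. coeff f (ordz f) = smult \<mu> (coeff g (ordz g)))"
proof -
  define m where "m = ordz f"
  define n where "n = ordz g"
  define f1 where "f1 = poly_shift m f"
  define g1 where "g1 = poly_shift n g"
  have ff: "f = [:0,1:] ^ m * f1" and f10: "coeff f1 0 = coeff f m"
    using ordz_factor[OF f] unfolding m_def f1_def by auto
  have gg: "g = [:0,1:] ^ n * g1" and g10: "coeff g1 0 = coeff g n"
    using ordz_factor[OF g] unfolding n_def g1_def by auto
  have "([:0,1:] ^ n * g1) * Yd c ([:0,1:] ^ m * f1) - ([:0,1:] ^ m * f1) * Yd c ([:0,1:] ^ n * g1) = 0"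
    using eq ff gg by simp
  from bracket_zero[OF is_der_Yd Yd_X _ this]
  have br: "g1 * Yd c f1 - f1 * Yd c g1 + (of_nat m - of_nat n) * G2 c * f1 * g1 = 0" by simp
  define u where "u = coeff f m"
  define v where "v = coeff g n"
  have u: "u \<noteq> 0" unfolding u_def m_def using ordz_nz[OF f] .
  have v: "v \<noteq> 0" unfolding v_def n_def using ordz_nz[OF g] .
  have "coeff (g1 * Yd c f1 - f1 * Yd c g1 + (of_nat m - of_nat n) * G2 c * f1 * g1) 0 = 0"
    using br by simp
  then have "v * (- [:0,1:] * pderiv u) - u * (- [:0,1:] * pderiv v)
      + [:of_nat m - of_nat n:] * (1 - [:0,1:]) * u * v = 0"
    by (simp add: coeff_mult_0 coeff_Yd0 f10 g10 u_def v_def G2_def of_nat_poly)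
  from T1L[OF u v this] have k: "(of_nat m :: complex) - of_nat n = 0" and e: "u * pderiv v = v * pderiv u"
    by auto
  from k have "m = n" by simp
  moreover from DL[OF v e] obtain \<mu> where "u = smult \<mu> v" by blast
  ultimately show ?thesis unfolding m_def n_def u_def v_def by auto
qed

lemma L3:
  fixes p q :: t3
  assumes a: "a \<noteq> 0" and p: "p \<noteq> 0" and q: "q \<noteq> 0"
    and eq: "q * Dd a b c p - p * Dd a b c q = 0"
  shows "ordz p = ordz q \<and>
     coeff q (ordz q) * Yd c (coeff p (ordz p)) - coeff p (ordz p) * Yd c (coeff q (ordz q)) = 0"
proof -
  define m where "m = ordz p"
  define n where "n = ordz q"
  define p1 where "p1 = poly_shift m p"
  define q1 where "q1 = poly_shift n q"
  have pp: "p = [:0,1:] ^ m * p1" and p10: "coeff p1 0 = coeff p m"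
    using ordz_factor[OF p] unfolding m_def p1_def by auto
  have qq: "q = [:0,1:] ^ n * q1" and q10: "coeff q1 0 = coeff q n"
    using ordz_factor[OF q] unfolding n_def q1_def by auto
  have "([:0,1:] ^ n * q1) * Dd a b c ([:0,1:] ^ m * p1) - ([:0,1:] ^ m * p1) * Dd a b c ([:0,1:] ^ n * q1) = 0"
    using eq pp qq by simp
  from bracket_zero[OF is_der_Dd Dd_Z _ this]
  have br: "q1 * Dd a b c p1 - p1 * Dd a b c q1 + (of_nat m - of_nat n) * [:E2 a b:] * p1 * q1 = 0" by simp
  define f where "f = coeff p m"
  define g where "g = coeff q n"
  have f: "f \<noteq> 0" unfolding f_def m_def using ordz_nz[OF p] .
  have g: "g \<noteq> 0" unfolding g_def n_def using ordz_nz[OF q] .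
  have "coeff (q1 * Dd a b c p1 - p1 * Dd a b c q1 + (of_nat m - of_nat n) * [:E2 a b:] * p1 * q1) 0 = 0"
    using br by simp
  then have e0: "g * Yd c f - f * Yd c g + [:[:of_nat m - of_nat n:]:] * (E2 a b * f * g) = 0"
    by (simp add: coeff_mult_0 coeff_Dd0 p10 q10 f_def g_def of_nat_poly mult.assoc)
  from PL[OF a f g e0] have "m = n" by simp
  with e0 show ?thesis unfolding m_def n_def f_def g_def by simp
qed


definition ev2 :: "t2 \<Rightarrow> complex \<Rightarrow> complex \<Rightarrow> complex" where
  "ev2 a x y = poly (poly a [:x:]) y"
definition ev3 :: "t3 \<Rightarrow> complex \<Rightarrow> complex \<Rightarrow> complex \<Rightarrow> complex" where
  "ev3 p x y z = poly (poly (poly p [:[:z:]:]) [:x:]) y"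

lemma ev2_pCons: "ev2 (pCons b a) x y = poly b y + x * ev2 a x y"
  by (simp add: ev2_def)
lemma ev3_pCons: "ev3 (pCons a p) x y z = ev2 a x y + z * ev3 p x y z"
  by (simp add: ev3_def ev2_def)
lemma ev2_add: "ev2 (a + b) x y = ev2 a x y + ev2 b x y" by (simp add: ev2_def)
lemma ev3_add: "ev3 (a + b) x y z = ev3 a x y z + ev3 b x y z" by (simp add: ev3_def)
lemma ev3_diff: "ev3 (a - b) x y z = ev3 a x y z - ev3 b x y z" by (simp add: ev3_def)
lemma ev3_mult: "ev3 (a * b) x y z = ev3 a x y z * ev3 b x y z" by (simp add: ev3_def)
lemma ev3_0: "ev3 0 x y z = 0" by (simp add: ev3_def)

lemma ev2_dx: "((\<lambda>t. ev2 a t y) has_field_derivative ev2 (pderiv a) x y) (at x)"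
proof (induction a)
  case 0 then show ?case by (simp add: ev2_def)
next
  case (pCons b a)
  have "((\<lambda>t. poly b y + t * ev2 a t y) has_field_derivative (0 + (1 * ev2 a x y + ev2 (pderiv a) x y * x))) (at x)"
    by (rule DERIV_add[OF DERIV_const DERIV_mult[OF DERIV_ident pCons.IH]])
  then show ?case by (simp add: ev2_pCons pderiv_pCons ev2_add mult.commute)
qed

lemma ev2_dy: "((\<lambda>t. ev2 a x t) has_field_derivative ev2 (map_poly pderiv a) x y) (at y)"
proof (induction a)
  case 0 then show ?case by (simp add: ev2_def)
next
  case (pCons b a)
  have "((\<lambda>t. poly b t + x * ev2 a x t) has_field_derivative (poly (pderiv b) y + x * ev2 (map_poly pderiv a) x y)) (at y)"
    by (rule DERIV_add[OF poly_DERIV DERIV_cmult[OF pCons.IH]])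
  then show ?case by (simp add: ev2_pCons map_poly_pCons)
qed

lemma ev3_dz: "((\<lambda>t. ev3 p x y t) has_field_derivative ev3 (pderiv p) x y z) (at z)"
proof (induction p)
  case 0 then show ?case by (simp add: ev3_def)
next
  case (pCons a p)
  have "((\<lambda>t. ev2 a x y + t * ev3 p x y t) has_field_derivative (0 + (1 * ev3 p x y z + ev3 (pderiv p) x y z * z))) (at z)"
    by (rule DERIV_add[OF DERIV_const DERIV_mult[OF DERIV_ident pCons.IH]])
  moreover have "ev2 0 x y = 0" by (simp add: ev2_def)
  ultimately show ?case by (simp add: ev3_pCons pderiv_pCons ev3_add mult.commute)
qed

lemma ev3_dx: "((\<lambda>t. ev3 p t y z) has_field_derivative ev3 (map_poly pderiv p) x y z) (at x)"
proof (induction p)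
  case 0 then show ?case by (simp add: ev3_def)
next
  case (pCons a p)
  have "((\<lambda>t. ev2 a t y + z * ev3 p t y z) has_field_derivative (ev2 (pderiv a) x y + z * ev3 (map_poly pderiv p) x y z)) (at x)"
    by (rule DERIV_add[OF ev2_dx DERIV_cmult[OF pCons.IH]])
  then show ?case by (simp add: ev3_pCons map_poly_pCons)
qed

lemma ev3_dy: "((\<lambda>t. ev3 p x t z) has_field_derivative ev3 (map_poly (map_poly pderiv) p) x y z) (at y)"
proof (induction p)
  case 0 then show ?case by (simp add: ev3_def)
next
  case (pCons a p)
  have "((\<lambda>t. ev2 a x t + z * ev3 p x t z) has_field_derivative (ev2 (map_poly pderiv a) x y + z * ev3 (map_poly (map_poly pderiv) p) x y z)) (at y)"
    by (rule DERIV_add[OF ev2_dy DERIV_cmult[OF pCons.IH]])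
  then show ?case by (simp add: ev3_pCons map_poly_pCons)
qed

lemma ev2_alt: "ev2 a x y = poly (map_poly (\<lambda>b. poly b y) a) x"
  by (induction a) (simp_all add: ev2_pCons map_poly_pCons ev2_def)

lemma ev3_alt: "ev3 p x y z = poly (map_poly (\<lambda>a. ev2 a x y) p) z"
proof (induction p)
  case 0 then show ?case by (simp add: ev3_def)
next
  case (pCons a p)
  have "ev2 0 x y = 0" by (simp add: ev2_def)
  then show ?case using pCons by (simp add: ev3_pCons map_poly_pCons)
qed

lemma ev2_zero: assumes "\<forall>x y. ev2 a x y = 0" shows "a = 0"
proof (rule poly_eqI)
  fix i
  have "\<forall>y. map_poly (\<lambda>b. poly b y) a = 0"
    using assms unfolding ev2_alt using poly_all_0_iff_0 by blast
  then have "\<forall>y. poly (coeff a i) y = 0"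
    by (metis coeff_0 coeff_map_poly poly_0)
  then show "coeff a i = coeff 0 i" using poly_all_0_iff_0[of "coeff a i"] by simp
qed

lemma ev3_zero: assumes "\<forall>x y z. ev3 r x y z = 0" shows "r = 0"
proof (rule poly_eqI)
  fix i
  have "\<forall>x y. map_poly (\<lambda>a. ev2 a x y) r = 0"
    using assms unfolding ev3_alt using poly_all_0_iff_0 by blast
  moreover have "ev2 0 x y = 0" for x y by (simp add: ev2_def)
  ultimately have "\<forall>x y. ev2 (coeff r i) x y = 0"
    by (metis coeff_0 coeff_map_poly)
  then show "coeff r i = coeff 0 i" using ev2_zero by simp
qed

lemma ev3_monom: "ev3 (monom (monom (monom w j) i) k) x y z = w * x ^ i * y ^ j * z ^ k"
  by (simp add: ev3_def poly_monom poly_power)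

lemma ev3_sum: "ev3 (sum f A) x y z = (\<Sum>i\<in>A. ev3 (f i) x y z)"
  by (simp add: ev3_def poly_sum)

lemma poly3_ev3:
  assumes "poly3 F"
  shows "\<exists>p. F = (\<lambda>x y z. ev3 p x y z)"
proof -
  obtain N cf where F: "\<forall>x y z. F x y z = (\<Sum>i\<le>N. \<Sum>j\<le>N. \<Sum>k\<le>N. cf i j k * x ^ i * y ^ j * z ^ k)"
    using assms unfolding poly3_def by blast
  define p where "p = (\<Sum>i\<le>N. \<Sum>j\<le>N. \<Sum>k\<le>N. monom (monom (monom (cf i j k) j) i) k)"
  have "F x y z = ev3 p x y z" for x y z
    unfolding p_def using F by (simp add: ev3_sum ev3_monom)
  then show ?thesis by blast
qed

lemma ev3_A1: "ev3 [:B1 c, [:0,0,-[:a:]:]:] x y z = x * (1 - y + c * x - a * x * z)"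
  by (simp add: ev3_def B1_def algebra_simps power2_eq_square)
lemma ev3_A2: "ev3 [:B2:] x y z = y * (-1 + x)"
  by (simp add: ev3_def B2_def algebra_simps)
lemma ev3_A3: "ev3 [:0, E2 a b:] x y z = z * (- b + a * x ^ 2)"
  by (simp add: ev3_def E2_def algebra_simps power2_eq_square)
lemma ev3_const: "ev3 [:[:[:m:]:]:] x y z = m"
  by (simp add: ev3_def)


lemma Dd_const: "Dd a b c [:[:[:m:]:]:] = 0"
  by (simp add: Dd_def map_poly_pCons)

lemma W_shift:
  assumes "q * Dd a b c p - p * Dd a b c q = 0"
  shows "q * Dd a b c (p - [:[:[:m:]:]:] * q) - (p - [:[:[:m:]:]:] * q) * Dd a b c q = 0"
proof -
  define C :: t3 where "C = [:[:[:m:]:]:]"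
  have C0: "Dd a b c C = 0" unfolding C_def by (rule Dd_const)
  have "Dd a b c (p - C * q) = Dd a b c p - Dd a b c (C * q)" by (rule is_der_diff[OF is_der_Dd])
  moreover have "Dd a b c (C * q) = Dd a b c C * q + C * Dd a b c q" by (rule is_derD(2)[OF is_der_Dd])
  ultimately have "Dd a b c (p - C * q) = Dd a b c p - C * Dd a b c q" using C0 by simp
  moreover have "q * (P - C * Dq) - (p - C * q) * Dq = q * P - p * Dq" for P Dq :: t3
    by (simp add: algebra_simps)
  ultimately show ?thesis using assms unfolding C_def[symmetric] by simp
qed

theorem theorem1p5:
  fixes a b c :: real
  assumes "a > 0" and "c > 0" and "b \<ge> 0"
  shows "\<not> (\<exists>P Q. rational_first_integral a b c P Q)"
proof
  assume "\<exists>P Q. rational_first_integral a b c P Q"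
  then obtain P Q where R: "rational_first_integral a b c P Q" by blast
  then have pP: "poly3 P" and pQ: "poly3 Q" and Qnz: "\<exists>x y z. Q x y z \<noteq> 0"
    and nc: "\<not> (\<exists>k. \<forall>x y z. Q x y z \<noteq> 0 \<longrightarrow> P x y z / Q x y z = k)"
    and inv: "\<forall>x y z. Q x y z \<noteq> 0 \<longrightarrow> vfX a b c (\<lambda>x y z. P x y z / Q x y z) x y z = 0"
    unfolding rational_first_integral_def by blast+
  obtain p where Pp: "P = (\<lambda>x y z. ev3 p x y z)" using poly3_ev3[OF pP] by blast
  obtain q where Qq: "Q = (\<lambda>x y z. ev3 q x y z)" using poly3_ev3[OF pQ] by blast
  define ca where "ca = complex_of_real a"
  define cb where "cb = complex_of_real b"
  define cc where "cc = complex_of_real c"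
  have a0: "ca \<noteq> 0" unfolding ca_def using assms by simp
  have q0: "q \<noteq> 0" using Qnz unfolding Qq by (auto simp: ev3_0)
  have ptw: "ev3 (q * Dd ca cb cc p - p * Dd ca cb cc q) x y z = 0" if Qn: "ev3 q x y z \<noteq> 0" for x y z
  proof -
    define Qv where "Qv = ev3 q x y z"
    define Pv where "Pv = ev3 p x y z"
    have dx: "deriv (\<lambda>t. ev3 p t y z / ev3 q t y z) x =
        (ev3 (map_poly pderiv p) x y z * Qv - Pv * ev3 (map_poly pderiv q) x y z) / (Qv * Qv)"
      unfolding Qv_def Pv_def by (rule DERIV_imp_deriv, rule DERIV_divide[OF ev3_dx ev3_dx Qn])
    have dy: "deriv (\<lambda>t. ev3 p x t z / ev3 q x t z) y =
        (ev3 (map_poly (map_poly pderiv) p) x y z * Qv - Pv * ev3 (map_poly (map_poly pderiv) q) x y z) / (Qv * Qv)"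
      unfolding Qv_def Pv_def by (rule DERIV_imp_deriv, rule DERIV_divide[OF ev3_dy ev3_dy Qn])
    have dz: "deriv (\<lambda>t. ev3 p x y t / ev3 q x y t) z =
        (ev3 (pderiv p) x y z * Qv - Pv * ev3 (pderiv q) x y z) / (Qv * Qv)"
      unfolding Qv_def Pv_def by (rule DERIV_imp_deriv, rule DERIV_divide[OF ev3_dz ev3_dz Qn])
    have "vfX a b c (\<lambda>x y z. P x y z / Q x y z) x y z = 0" using inv Qn unfolding Pp Qq by blast
    then have "x * (1 - y + cc * x - ca * x * z) *
        ((ev3 (map_poly pderiv p) x y z * Qv - Pv * ev3 (map_poly pderiv q) x y z) / (Qv * Qv))
      + y * (-1 + x) * ((ev3 (map_poly (map_poly pderiv) p) x y z * Qv - Pv * ev3 (map_poly (map_poly pderiv) q) x y z) / (Qv * Qv))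
      + z * (- cb + ca * x ^ 2) * ((ev3 (pderiv p) x y z * Qv - Pv * ev3 (pderiv q) x y z) / (Qv * Qv)) = 0"
      unfolding vfX_def Pp Qq dx dy dz ca_def cb_def cc_def by simp
    then have num: "x * (1 - y + cc * x - ca * x * z) *
        (ev3 (map_poly pderiv p) x y z * Qv - Pv * ev3 (map_poly pderiv q) x y z)
      + y * (-1 + x) * (ev3 (map_poly (map_poly pderiv) p) x y z * Qv - Pv * ev3 (map_poly (map_poly pderiv) q) x y z)
      + z * (- cb + ca * x ^ 2) * (ev3 (pderiv p) x y z * Qv - Pv * ev3 (pderiv q) x y z) = 0"
    proof -
      have gen: "A1 * (N1 / D) + A2 * (N2 / D) + A3 * (N3 / D) = (A1 * N1 + A2 * N2 + A3 * N3) / D"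
        for A1 A2 A3 N1 N2 N3 D :: complex by (simp add: add_divide_distrib)
      have D: "Qv * Qv \<noteq> 0" using Qn unfolding Qv_def by simp
      show ?thesis using \<open>x * (1 - y + cc * x - ca * x * z) * _ + _ + _ = 0\<close> D unfolding gen by simp
    qed
    have "ev3 (q * Dd ca cb cc p - p * Dd ca cb cc q) x y z =
       Qv * (x * (1 - y + cc * x - ca * x * z) * ev3 (map_poly pderiv p) x y z
          + y * (-1 + x) * ev3 (map_poly (map_poly pderiv) p) x y z
          + z * (- cb + ca * x ^ 2) * ev3 (pderiv p) x y z)
     - Pv * (x * (1 - y + cc * x - ca * x * z) * ev3 (map_poly pderiv q) x y z
          + y * (-1 + x) * ev3 (map_poly (map_poly pderiv) q) x y z
          + z * (- cb + ca * x ^ 2) * ev3 (pderiv q) x y z)"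
      unfolding Qv_def Pv_def Dd_def ev3_diff ev3_add ev3_mult ev3_A1 ev3_A2 ev3_A3 by (simp add: algebra_simps)
    also have "\<dots> = 0" using num by (simp add: algebra_simps)
    finally show ?thesis .
  qed
  have W0: "q * Dd ca cb cc p - p * Dd ca cb cc q = 0"
  proof -
    have "\<forall>x y z. ev3 ((q * Dd ca cb cc p - p * Dd ca cb cc q) * q) x y z = 0"
      using ptw by (auto simp: ev3_mult)
    then have "(q * Dd ca cb cc p - p * Dd ca cb cc q) * q = 0" by (rule ev3_zero)
    then show ?thesis using q0 by simp
  qed
  have nC: "p - [:[:[:\<mu>:]:]:] * q \<noteq> 0" for \<mu>
  proof
    assume "p - [:[:[:\<mu>:]:]:] * q = 0"
    then have pe: "p = [:[:[:\<mu>:]:]:] * q" by simp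
    have "\<forall>x y z. Q x y z \<noteq> 0 \<longrightarrow> P x y z / Q x y z = \<mu>"
      unfolding Pp Qq pe ev3_mult ev3_const by simp
    then show False using nc by blast
  qed
  have p0: "p \<noteq> 0" using nC[of 0] by simp
  from L3[OF a0 p0 q0 W0] have om: "ordz p = ordz q"
    and E: "coeff q (ordz q) * Yd cc (coeff p (ordz p)) - coeff p (ordz p) * Yd cc (coeff q (ordz q)) = 0"
    by auto
  define m where "m = ordz q"
  define f where "f = coeff p m"
  define g where "g = coeff q m"
  have f0: "f \<noteq> 0" unfolding f_def m_def using ordz_nz[OF p0] om by simp
  have g0: "g \<noteq> 0" unfolding g_def m_def using ordz_nz[OF q0] by simp
  have E': "g * Yd cc f - f * Yd cc g = 0" using E om unfolding f_def g_def m_def by simp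
  from PL2[OF f0 g0 E'] obtain \<mu> where ol: "ordz f = ordz g"
    and fl: "coeff f (ordz f) = smult \<mu> (coeff g (ordz g))" by blast
  define r where "r = p - [:[:[:\<mu>:]:]:] * q"
  have r0: "r \<noteq> 0" unfolding r_def by (rule nC)
  have Wr: "q * Dd ca cb cc r - r * Dd ca cb cc q = 0" unfolding r_def by (rule W_shift[OF W0])
  from L3[OF a0 r0 q0 Wr] have omr: "ordz r = ordz q"
    and Er: "coeff q (ordz q) * Yd cc (coeff r (ordz r)) - coeff r (ordz r) * Yd cc (coeff q (ordz q)) = 0"
    by auto
  define fr where "fr = coeff r m"
  have fr0: "fr \<noteq> 0" unfolding fr_def m_def using ordz_nz[OF r0] omr by simp
  have Er': "g * Yd cc fr - fr * Yd cc g = 0" using Er omr unfolding fr_def g_def m_def by simp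
  from PL2[OF fr0 g0 Er'] have olr: "ordz fr = ordz g" by blast
  have "coeff fr (ordz fr) \<noteq> 0" using ordz_nz[OF fr0] .
  moreover have "fr = f - smult [:\<mu>:] g" unfolding fr_def r_def f_def g_def by simp
  ultimately have "coeff f (ordz g) - smult \<mu> (coeff g (ordz g)) \<noteq> 0" using olr by simp
  moreover have "coeff f (ordz g) = smult \<mu> (coeff g (ordz g))" using fl ol by simp
  ultimately show False by simp
qed

end
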